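(* Let $X$ be a nonempty compact metric space, $Y$ a compact metric space and $\mathcal Y$ an $(X)$-regularizing family for $Y$. Then the quotient space $Y/\mathcal Y$ is homeomorphic to the Cantor space.
   Context: An $(X)$-regularizing family for $Y$ is a countably infinite family $\mathcal Y$ of subsets of $Y$ such that: (a1) the members are pairwise disjoint subspaces homeomorphic to $X$; (a2) $\mathcal Y$ is null (for every $\varepsilon>0$ only finitely many members have diameter $\ge\varepsilon$); (a3) each member has dense complement in $Y$; (a4) $\bigcup\mathcal Y$ is dense in $Y$; (a5) any two points not in a common member of $\mathcal Y$ are separated by an open, closed, $\mathcal Y$-saturated subset of $Y$ (each member is contained in it or disjoint from it). $Y/\mathcal Y$ is the quotient space of the decomposition of $Y$ whose elements are the members of $\mathcal Y$ and the singletons of points of $Y\setminus\bigcup\mathcal Y$. *)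

theory Defs
  imports "HOL-Analysis.Analysis"
begin

definition regularizing_family ::
  "'b::metric_space set \<Rightarrow> 'a::metric_space set \<Rightarrow> 'a set set \<Rightarrow> bool" where
  "regularizing_family X Y \<F> \<longleftrightarrow>
     \<F> \<subseteq> Pow Y \<and> countable \<F> \<and> infinite \<F> \<and>
     \<comment> \<open>(a1)\<close>
     pairwise disjnt \<F> \<and>
     (\<forall>A\<in>\<F>. subtopology euclidean A homeomorphic_space subtopology euclidean X) \<and>
     \<comment> \<open>(a2) null\<close>
     (\<forall>e>0. finite {A\<in>\<F>. diameter A \<ge> e}) \<and>
     \<comment> \<open>(a3) each member has dense complement in Y\<close>
     (\<forall>A\<in>\<F>. Y \<subseteq> closure (Y - A)) \<and>
     \<comment> \<open>(a4) the union is dense in Y\<close>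
     Y \<subseteq> closure (\<Union>\<F>) \<and>
     \<comment> \<open>(a5) separation by clopen saturated sets\<close>
     (\<forall>x\<in>Y. \<forall>y\<in>Y. x \<noteq> y \<and> \<not> (\<exists>A\<in>\<F>. x \<in> A \<and> y \<in> A) \<longrightarrow>
        (\<exists>U. openin (subtopology euclidean Y) U \<and> closedin (subtopology euclidean Y) U \<and>
             (\<forall>A\<in>\<F>. A \<subseteq> U \<or> A \<inter> U = {}) \<and> x \<in> U \<and> y \<notin> U))"

definition decomposition :: "'a set \<Rightarrow> 'a set set \<Rightarrow> 'a set set" where
  "decomposition Y \<F> = \<F> \<union> {{y} | y. y \<in> Y - \<Union>\<F>}"

definition quotient_topology :: "'a::topological_space set \<Rightarrow> 'a set set \<Rightarrow> 'a set topology" where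
  "quotient_topology Y D = topology (\<lambda>U. U \<subseteq> D \<and> openin (subtopology euclidean Y) (\<Union>U))"


definition cantor_space :: "(nat \<Rightarrow> bool) topology" where
  "cantor_space = product_topology (\<lambda>_. discrete_topology UNIV) UNIV"

end

theory Submission
  imports Defs
begin

lemma countable_clopen:
  fixes Y :: "'a::metric_space set"
  assumes cY: "compact Y"
  shows "countable {U. openin (top_of_set Y) U \<and> closedin (top_of_set Y) U}"
proof -
  have "\<forall>n::nat. \<exists>K. finite K \<and> Y \<subseteq> (\<Union>c\<in>K. ball c (inverse (real (Suc n))))"
  proof
    fix n :: nat
    have "Y \<subseteq> (\<Union>c\<in>Y. ball c (inverse (real (Suc n))))" by auto
    then obtain K where "K \<subseteq> Y" "finite K" "Y \<subseteq> (\<Union>c\<in>K. ball c (inverse (real (Suc n))))"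
      using compactE_image[OF cY, of Y "\<lambda>c. ball c (inverse (real (Suc n)))"] by auto
    then show "\<exists>K. finite K \<and> Y \<subseteq> (\<Union>c\<in>K. ball c (inverse (real (Suc n))))" by blast
  qed
  then obtain K where K: "\<And>n. finite (K n) \<and> Y \<subseteq> (\<Union>c\<in>K n. ball c (inverse (real (Suc n))))"
    by metis
  define B where "B = (\<Union>n. (\<lambda>c. ball c (inverse (real (Suc n)))) ` K n)"
  have cB: "countable B" unfolding B_def using K by (auto intro: countable_finite)
  have "{U. openin (top_of_set Y) U \<and> closedin (top_of_set Y) U} \<subseteq> (\<lambda>G. Y \<inter> \<Union>G) ` {G. finite G \<and> G \<subseteq> B}"
  proof
    fix U assume "U \<in> {U. openin (top_of_set Y) U \<and> closedin (top_of_set Y) U}"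
    then have Uo: "openin (top_of_set Y) U" and Uc: "closedin (top_of_set Y) U" by auto
    have cU: "compact U" using closedin_compact[OF cY Uc] .
    have UY: "U \<subseteq> Y" using Uo by (simp add: openin_contains_ball)
    have cov: "U \<subseteq> \<Union>{b\<in>B. Y \<inter> b \<subseteq> U}"
    proof
      fix x assume xU: "x \<in> U"
      obtain e where e: "e > 0" "ball x e \<inter> Y \<subseteq> U" using Uo xU by (meson openin_contains_ball)
      obtain n where n: "inverse (real (Suc n)) < e/2" using reals_Archimedean e by (metis half_gt_zero)
      define r where "r = inverse (real (Suc n))"
      have "x \<in> Y" using xU UY by auto
      then obtain c where c: "c \<in> K n" "x \<in> ball c r" using K[of n] unfolding r_def by auto
      have "ball c r \<subseteq> ball x e"
      proof
        fix z assume "z \<in> ball c r"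
        then have "dist c z < r" by simp
        moreover have "dist x c < r" using c by (simp add: dist_commute)
        moreover have "dist x z \<le> dist x c + dist c z" by (rule dist_triangle)
        ultimately show "z \<in> ball x e" using n unfolding r_def by simp
      qed
      moreover have "ball c r \<in> B" unfolding B_def r_def using c by auto
      ultimately show "x \<in> \<Union>{b\<in>B. Y \<inter> b \<subseteq> U}" using c e by blast
    qed
    have opB: "\<And>b. b \<in> {b\<in>B. Y \<inter> b \<subseteq> U} \<Longrightarrow> open b" unfolding B_def by auto
    obtain G where G: "G \<subseteq> {b\<in>B. Y \<inter> b \<subseteq> U}" "finite G" "U \<subseteq> \<Union>G"
      using compactE[OF cU cov opB] by blast
    then have "U = Y \<inter> \<Union>G" using UY by auto
    then show "U \<in> (\<lambda>G. Y \<inter> \<Union>G) ` {G. finite G \<and> G \<subseteq> B}" using G by auto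
  qed
  moreover have "countable ((\<lambda>G. Y \<inter> \<Union>G) ` {G. finite G \<and> G \<subseteq> B})"
    using countable_Collect_finite_subset[OF cB] by simp
  ultimately show ?thesis by (rule countable_subset)
qed


locale regsetup =
  fixes X :: "'b::metric_space set" and Y :: "'a::metric_space set" and F :: "'a set set"
  assumes cY: "compact Y" and X0: "X \<noteq> {}" and rf: "regularizing_family X Y F"
begin

lemmas rfc = rf[unfolded regularizing_family_def]

lemma FY: "F \<subseteq> Pow Y" using rfc by (elim conjE)
lemma Finf: "infinite F" using rfc by (elim conjE)
lemma Fdisj: "pairwise disjnt F" using rfc by (elim conjE)
lemma Fhom_all: "\<forall>A\<in>F. subtopology euclidean A homeomorphic_space subtopology euclidean X"
  using rfc by (elim conjE)
lemma Fcomp_all: "\<forall>A\<in>F. Y \<subseteq> closure (Y - A)" using rfc by (elim conjE)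
lemma Fdense: "Y \<subseteq> closure (\<Union>F)" using rfc by (elim conjE)
lemma Fsep_all: "\<forall>x\<in>Y. \<forall>y\<in>Y. x \<noteq> y \<and> \<not> (\<exists>A\<in>F. x \<in> A \<and> y \<in> A) \<longrightarrow>
        (\<exists>U. openin (subtopology euclidean Y) U \<and> closedin (subtopology euclidean Y) U \<and>
             (\<forall>A\<in>F. A \<subseteq> U \<or> A \<inter> U = {}) \<and> x \<in> U \<and> y \<notin> U)"
  using rfc by (elim conjE)

lemma Fhom: "A \<in> F \<Longrightarrow> subtopology euclidean A homeomorphic_space subtopology euclidean X"
  using Fhom_all by (rule bspec)
lemma Fcomp: "A \<in> F \<Longrightarrow> Y \<subseteq> closure (Y - A)"
  using Fcomp_all by (rule bspec)
lemma Fsep: "x \<in> Y \<Longrightarrow> y \<in> Y \<Longrightarrow> x \<noteq> y \<Longrightarrow> \<not> (\<exists>A\<in>F. x \<in> A \<and> y \<in> A) \<Longrightarrow>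
        (\<exists>U. openin (subtopology euclidean Y) U \<and> closedin (subtopology euclidean Y) U \<and>
             (\<forall>A\<in>F. A \<subseteq> U \<or> A \<inter> U = {}) \<and> x \<in> U \<and> y \<notin> U)"
  using Fsep_all by blast

lemma Fne: assumes "A \<in> F" shows "A \<noteq> {}"
proof
  assume "A = {}"
  then have "subtopology euclidean X = trivial_topology"
    using homeomorphic_empty_space[OF Fhom[OF assms]] by simp
  then show False using X0 by (simp add: subtopology_trivial_iff)
qed

lemma Fdisj': "A \<in> F \<Longrightarrow> B \<in> F \<Longrightarrow> x \<in> A \<Longrightarrow> x \<in> B \<Longrightarrow> A = B"
  using Fdisj unfolding pairwise_def disjnt_def by blast

lemma Yne: "Y \<noteq> {}"
proof
  assume "Y = {}"
  then have "F \<subseteq> {{}}" using FY by auto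
  then show False using Finf finite_subset by blast
qed

definition sat where "sat U \<longleftrightarrow> (\<forall>A\<in>F. A \<subseteq> U \<or> A \<inter> U = {})"
definition clop where "clop U \<longleftrightarrow> openin (top_of_set Y) U \<and> closedin (top_of_set Y) U"
definition good where "good P \<longleftrightarrow> P \<noteq> {} \<and> clop P \<and> sat P"
definition CS where "CS = {U. clop U \<and> sat U}"
definition C where "C n = from_nat_into CS n"
definition gsplit where "gsplit P p \<longleftrightarrow> good (fst p) \<and> good (snd p) \<and> fst p \<union> snd p = P \<and> fst p \<inter> snd p = {}"
definition spl where "spl n P = (if P \<inter> C n \<noteq> {} \<and> P - C n \<noteq> {} then (P \<inter> C n, P - C n)
   else (SOME p. gsplit P p))"
definition half where "half n P b = (if b then fst (spl n P) else snd (spl n P))"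

lemma CS_sub: "CS \<subseteq> {U. openin (top_of_set Y) U \<and> closedin (top_of_set Y) U}"
  unfolding CS_def clop_def by blast

lemma CS_count: "countable CS"
  using countable_subset[OF CS_sub countable_clopen[OF cY]] .

lemma Y_CS: "Y \<in> CS"
proof -
  have "openin (top_of_set Y) Y" using openin_topspace[of "top_of_set Y"] by simp
  moreover have "closedin (top_of_set Y) Y" using closedin_topspace[of "top_of_set Y"] by simp
  moreover have "sat Y" unfolding sat_def using FY by blast
  ultimately show ?thesis unfolding CS_def clop_def by blast
qed

lemma C_CS: "C n \<in> CS"
proof -
  have "CS \<noteq> {}" using Y_CS by blast
  then show ?thesis unfolding C_def by (rule from_nat_into)
qed

lemma C_surj: "U \<in> CS \<Longrightarrow> \<exists>n. C n = U"
  unfolding C_def by (rule from_nat_into_surj[OF CS_count])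

lemma good_sub: "good P \<Longrightarrow> P \<subseteq> Y"
proof -
  assume "good P"
  then have "closedin (top_of_set Y) P" unfolding good_def clop_def by blast
  then have "P \<subseteq> topspace (top_of_set Y)" by (rule closedin_subset)
  then show ?thesis by simp
qed

lemma sat_Int: assumes "sat P" "sat U" shows "sat (P \<inter> U)"
  unfolding sat_def
proof
  fix A assume A: "A \<in> F"
  from assms(1) A have "A \<subseteq> P \<or> A \<inter> P = {}" by (simp add: sat_def)
  moreover from assms(2) A have "A \<subseteq> U \<or> A \<inter> U = {}" by (simp add: sat_def)
  ultimately show "A \<subseteq> P \<inter> U \<or> A \<inter> (P \<inter> U) = {}" by blast
qed

lemma sat_Diff: assumes "sat P" "sat U" shows "sat (P - U)"
  unfolding sat_def
proof
  fix A assume A: "A \<in> F"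
  from assms(1) A have "A \<subseteq> P \<or> A \<inter> P = {}" by (simp add: sat_def)
  moreover from assms(2) A have "A \<subseteq> U \<or> A \<inter> U = {}" by (simp add: sat_def)
  ultimately show "A \<subseteq> P - U \<or> A \<inter> (P - U) = {}" by blast
qed

lemma exists_split:
  assumes gP: "good P" shows "\<exists>p. gsplit P p"
proof -
  obtain x where x: "x \<in> P" using gP by (auto simp: good_def)
  have PY: "P \<subseteq> Y" using good_sub[OF gP] .
  have Po: "openin (top_of_set Y) P" using gP by (simp add: good_def clop_def)
  then obtain W where O: "open W" "P = Y \<inter> W" by (auto simp: openin_open)
  have xY: "x \<in> Y" using x PY by auto
  have "\<exists>y\<in>P. x \<noteq> y \<and> \<not> (\<exists>A\<in>F. x \<in> A \<and> y \<in> A)"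
  proof (cases "\<exists>A\<in>F. x \<in> A")
    case True
    then obtain A where A: "A \<in> F" "x \<in> A" by (rule bexE)
    have xcl: "x \<in> closure (Y - A)" by (rule subsetD[OF Fcomp[OF A(1)] xY])
    have xW: "x \<in> W" using x unfolding O(2) by simp
    have ne: "W \<inter> (Y - A) \<noteq> {}"
    proof
      assume "W \<inter> (Y - A) = {}"
      then have "W \<inter> closure (Y - A) = {}" using open_Int_closure_eq_empty[OF O(1)] by simp
      then show False using xW xcl by blast
    qed
    then obtain y where y: "y \<in> W" "y \<in> Y" "y \<notin> A" by blast
    have yP: "y \<in> P" unfolding O(2) using y by simp
    have nc: "\<not> (\<exists>A'\<in>F. x \<in> A' \<and> y \<in> A')"
    proof
      assume "\<exists>A'\<in>F. x \<in> A' \<and> y \<in> A'"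
      then obtain A' where A': "A' \<in> F" "x \<in> A'" "y \<in> A'" by blast
      have "A' = A" using Fdisj'[OF A'(1) A(1) A'(2) A(2)] .
      then show False using A'(3) y(3) by simp
    qed
    have "x \<noteq> y" using A(2) y(3) by auto
    then show ?thesis using yP nc by (intro bexI[of _ y]) simp_all
  next
    case False
    have xcl: "x \<in> closure (\<Union>F)" by (rule subsetD[OF Fdense xY])
    have xW: "x \<in> W" using x unfolding O(2) by simp
    have ne: "W \<inter> \<Union>F \<noteq> {}"
    proof
      assume "W \<inter> \<Union>F = {}"
      then have "W \<inter> closure (\<Union>F) = {}" using open_Int_closure_eq_empty[OF O(1)] by simp
      then show False using xW xcl by blast
    qed
    then obtain y B where y: "y \<in> W" "y \<in> B" "B \<in> F" by blast
    have "B \<subseteq> Y" using FY y(3) by blast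
    then have "y \<in> Y" using y(2) by blast
    then have yP: "y \<in> P" unfolding O(2) using y by simp
    have "x \<noteq> y" using False y(2,3) by blast
    moreover have "\<not> (\<exists>A\<in>F. x \<in> A \<and> y \<in> A)" using False by blast
    ultimately show ?thesis using yP by (intro bexI[of _ y]) simp_all
  qed
  then obtain y where y1: "y \<in> P" and y23: "x \<noteq> y \<and> \<not> (\<exists>A\<in>F. x \<in> A \<and> y \<in> A)"
    by (rule bexE)
  note y = y1 y23[THEN conjunct1] y23[THEN conjunct2]
  have yY: "y \<in> Y" by (rule subsetD[OF PY y(1)])
  have "\<exists>U. openin (top_of_set Y) U \<and> closedin (top_of_set Y) U \<and>
     (\<forall>A\<in>F. A \<subseteq> U \<or> A \<inter> U = {}) \<and> x \<in> U \<and> y \<notin> U"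
    by (rule Fsep[OF xY yY y(2) y(3)])
  then obtain U where Uall: "openin (top_of_set Y) U \<and> closedin (top_of_set Y) U \<and>
     (\<forall>A\<in>F. A \<subseteq> U \<or> A \<inter> U = {}) \<and> x \<in> U \<and> y \<notin> U" by (rule exE)
  have U: "openin (top_of_set Y) U" "closedin (top_of_set Y) U"
     "\<forall>A\<in>F. A \<subseteq> U \<or> A \<inter> U = {}" "x \<in> U" "y \<notin> U"
    using Uall by simp_all
  have Us: "sat U" unfolding sat_def by (rule U(3))
  have Pc: "closedin (top_of_set Y) P" and Ps: "sat P" using gP by (simp_all add: good_def clop_def)
  have g1: "good (P \<inter> U)" unfolding good_def clop_def
  proof (intro conjI)
    show "P \<inter> U \<noteq> {}" using x U(4) by blast
    show "openin (top_of_set Y) (P \<inter> U)" using Po U(1) by (rule openin_Int)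
    show "closedin (top_of_set Y) (P \<inter> U)" using Pc U(2) by (rule closedin_Int)
    show "sat (P \<inter> U)" using Ps Us by (rule sat_Int)
  qed
  have g2: "good (P - U)" unfolding good_def clop_def
  proof (intro conjI)
    show "P - U \<noteq> {}" using y(1) U(5) by blast
    show "openin (top_of_set Y) (P - U)" using Po U(2) by (rule openin_diff)
    show "closedin (top_of_set Y) (P - U)" using Pc U(1) by (rule closedin_diff)
    show "sat (P - U)" using Ps Us by (rule sat_Diff)
  qed
  have "gsplit P (P \<inter> U, P - U)" unfolding gsplit_def using g1 g2 by auto
  then show ?thesis by blast
qed

lemma split_props:
  assumes gP: "good P"
  shows "good (half n P True)" "good (half n P False)"
    "half n P True \<union> half n P False = P" "half n P True \<inter> half n P False = {}"
proof -
  have "gsplit P (spl n P)"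
  proof (cases "P \<inter> C n \<noteq> {} \<and> P - C n \<noteq> {}")
    case True
    have "clop (C n)" "sat (C n)" using C_CS by (auto simp: CS_def)
    then have Co: "openin (top_of_set Y) (C n)" and Cc: "closedin (top_of_set Y) (C n)"
      and Cs: "sat (C n)" by (simp_all add: clop_def)
    have Po: "openin (top_of_set Y) P" and Pc: "closedin (top_of_set Y) P" and Ps: "sat P"
      using gP by (simp_all add: good_def clop_def)
    have "good (P \<inter> C n)" unfolding good_def clop_def
      using True openin_Int[OF Po Co] closedin_Int[OF Pc Cc] Ps Cs unfolding sat_def by blast
    moreover have "good (P - C n)" unfolding good_def clop_def
      using True openin_diff[OF Po Cc] closedin_diff[OF Pc Co] Ps Cs unfolding sat_def by blast
    ultimately have "good (P \<inter> C n)" "good (P - C n)" by blast+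
    then show ?thesis using True by (auto simp: spl_def gsplit_def)
  next
    case False
    have "gsplit P (SOME p. gsplit P p)" using exists_split[OF gP] by (rule someI_ex)
    moreover have "spl n P = (SOME p. gsplit P p)" unfolding spl_def using False by (rule if_not_P)
    ultimately show ?thesis by simp
  qed
  then show "good (half n P True)" "good (half n P False)"
    "half n P True \<union> half n P False = P" "half n P True \<inter> half n P False = {}"
    by (auto simp: half_def gsplit_def)
qed

primrec N :: "(nat \<Rightarrow> bool) \<Rightarrow> nat \<Rightarrow> 'a set" where
  "N w 0 = Y"
| "N w (Suc n) = half n (N w n) (w n)"

lemma good_Y: "good Y"
  using Yne Y_CS by (auto simp: good_def CS_def)

lemma N_good: "good (N w n)"
proof (induction n)
  case 0 then show ?case using good_Y by simp
next
  case (Suc n) then show ?case using split_props[OF Suc] by (cases "w n") auto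
qed

lemma N_Suc_sub: "N w (Suc n) \<subseteq> N w n"
  using split_props(3)[OF N_good[of w n], of n] by (cases "w n") auto

lemma N_mono: "m \<le> n \<Longrightarrow> N w n \<subseteq> N w m"
  using lift_Suc_antimono_le[of "N w", OF N_Suc_sub] by blast

primrec Py :: "'a \<Rightarrow> nat \<Rightarrow> 'a set" where
  "Py y 0 = Y"
| "Py y (Suc n) = half n (Py y n) (y \<in> half n (Py y n) True)"

definition bits where "bits y n = (y \<in> half n (Py y n) True)"

lemma Py_Suc: "Py y (Suc n) = half n (Py y n) (bits y n)"
  by (simp add: bits_def)

declare Py.simps(2)[simp del]

lemma Py_N: "Py y n = N (bits y) n"
  by (induction n) (simp_all add: Py_Suc)

lemma y_in_Py: "y \<in> Y \<Longrightarrow> y \<in> Py y n"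
proof (induction n)
  case 0 then show ?case by simp
next
  case (Suc n)
  have g: "good (Py y n)" using N_good Py_N by metis
  show ?case
  proof (cases "bits y n")
    case True then show ?thesis by (simp add: Py_Suc bits_def)
  next
    case False
    then have "y \<notin> half n (Py y n) True" by (simp add: bits_def)
    then show ?thesis using split_props(3)[OF g, of n] Suc False by (auto simp: Py_Suc)
  qed
qed

lemma bit_step:
  assumes "x \<in> N w (Suc j)" "Py x j = N w j" shows "bits x j = w j"
proof -
  have d: "half j (N w j) True \<inter> half j (N w j) False = {}" using split_props(4)[OF N_good] .
  show ?thesis using assms d unfolding bits_def by (cases "w j") auto
qed

lemma Py_eq: "x \<in> N w m \<Longrightarrow> j \<le> m \<Longrightarrow> Py x j = N w j"
proof (induction j)
  case 0 then show ?case by simp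
next
  case (Suc j)
  have IH: "Py x j = N w j" using Suc by simp
  have "x \<in> N w (Suc j)" using Suc N_mono by blast
  then have "bits x j = w j" using bit_step IH by blast
  then show ?case using IH by (simp add: Py_Suc)
qed

lemma bits_eq: "x \<in> N w (Suc j) \<Longrightarrow> bits x j = w j"
  using Py_eq[of x w "Suc j" j] bit_step by simp

lemma bits_same:
  assumes A: "A \<in> F" "y \<in> A" "z \<in> A" shows "bits y = bits z"
proof -
  have step: "bits y n = bits z n" if "Py y n = Py z n" for n
  proof -
    have "good (half n (Py y n) True)" using split_props(1)[OF N_good] Py_N by metis
    then have "A \<subseteq> half n (Py y n) True \<or> A \<inter> half n (Py y n) True = {}"
      using A by (auto simp: good_def sat_def)
    then show ?thesis using A that unfolding bits_def by auto
  qed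
  have "Py y n = Py z n" for n
  proof (induction n)
    case 0 then show ?case by simp
  next
    case (Suc n) then show ?case using step[OF Suc] by (simp add: Py_Suc)
  qed
  then show ?thesis using step by auto
qed

lemma bits_sep:
  assumes xy: "x \<in> Y" "y \<in> Y" "x \<noteq> y" "\<not> (\<exists>A\<in>F. x \<in> A \<and> y \<in> A)"
  shows "bits x \<noteq> bits y"
proof
  assume eq: "bits x = bits y"
  obtain U where U: "openin (top_of_set Y) U" "closedin (top_of_set Y) U"
     "\<forall>A\<in>F. A \<subseteq> U \<or> A \<inter> U = {}" "x \<in> U" "y \<notin> U"
    using Fsep[OF xy] by blast
  then have "U \<in> CS" by (auto simp: CS_def clop_def sat_def)
  then obtain n where n: "C n = U" using C_surj by blast
  define w where "w = bits x"
  define P where "P = N w n"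
  have xP: "x \<in> P" using y_in_Py[OF xy(1), of n] Py_N unfolding P_def w_def by metis
  have yP: "y \<in> P" using y_in_Py[OF xy(2), of n] Py_N eq unfolding P_def w_def by metis
  have sp: "spl n P = (P \<inter> C n, P - C n)" using xP yP U n by (auto simp: spl_def)
  have "x \<in> N w (Suc n)" using y_in_Py[OF xy(1), of "Suc n"] Py_N unfolding w_def by metis
  moreover have "y \<in> N w (Suc n)" using y_in_Py[OF xy(2), of "Suc n"] Py_N eq unfolding w_def by metis
  ultimately show False using sp U n unfolding P_def[symmetric] by (cases "w n") (auto simp: half_def P_def)
qed


definition D where "D = decomposition Y F"
definition Q where "Q = quotient_topology Y D"

lemma D_iff: "d \<in> D \<longleftrightarrow> d \<in> F \<or> (\<exists>y\<in>Y - \<Union>F. d = {y})"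
  by (auto simp: D_def decomposition_def)

lemma D_sub: "d \<in> D \<Longrightarrow> d \<subseteq> Y"
  using FY by (auto simp: D_iff)

lemma D_ne: "d \<in> D \<Longrightarrow> d \<noteq> {}"
  using Fne by (auto simp: D_iff)

lemma UD: "\<Union>D = Y"
proof
  show "\<Union>D \<subseteq> Y" using D_sub by blast
  show "Y \<subseteq> \<Union>D"
  proof
    fix y assume "y \<in> Y"
    then show "y \<in> \<Union>D"
    proof (cases "y \<in> \<Union>F")
      case True then show ?thesis by (auto simp: D_iff)
    next
      case False then have "{y} \<in> D" using \<open>y \<in> Y\<close> by (auto simp: D_iff)
      then show ?thesis by blast
    qed
  qed
qed

lemma D_disj: "d1 \<in> D \<Longrightarrow> d2 \<in> D \<Longrightarrow> x \<in> d1 \<Longrightarrow> x \<in> d2 \<Longrightarrow> d1 = d2"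
  unfolding D_iff using Fdisj' by blast

lemma istop_Int:
  assumes S: "S \<subseteq> D" "openin (top_of_set Y) (\<Union>S)" and T: "T \<subseteq> D" "openin (top_of_set Y) (\<Union>T)"
  shows "S \<inter> T \<subseteq> D \<and> openin (top_of_set Y) (\<Union>(S \<inter> T))"
proof -
  have "\<Union>(S \<inter> T) = \<Union>S \<inter> \<Union>T"
  proof
    show "\<Union>(S \<inter> T) \<subseteq> \<Union>S \<inter> \<Union>T" by blast
    show "\<Union>S \<inter> \<Union>T \<subseteq> \<Union>(S \<inter> T)"
    proof
      fix x assume "x \<in> \<Union>S \<inter> \<Union>T"
      then obtain s t where st: "s \<in> S" "t \<in> T" "x \<in> s" "x \<in> t" by blast
      have "s \<in> D" "t \<in> D" using st(1,2) S(1) T(1) by blast+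
      then have "s = t" using D_disj st(3,4) by blast
      then show "x \<in> \<Union>(S \<inter> T)" using st by blast
    qed
  qed
  moreover have "openin (top_of_set Y) (\<Union>S \<inter> \<Union>T)" using S(2) T(2) by (rule openin_Int)
  ultimately show ?thesis using S(1) by auto
qed

lemma istop_Union:
  assumes K: "\<forall>U\<in>K. U \<subseteq> D \<and> openin (top_of_set Y) (\<Union>U)"
  shows "\<Union>K \<subseteq> D \<and> openin (top_of_set Y) (\<Union>(\<Union>K))"
proof -
  have "\<Union>(\<Union>K) = \<Union>(Union ` K)" by blast
  moreover have "openin (top_of_set Y) (\<Union>(Union ` K))"
    by (rule openin_Union) (use K in blast)
  moreover have "\<Union>K \<subseteq> D" using K by blast
  ultimately show ?thesis by simp
qed

lemma istop: "istopology (\<lambda>U. U \<subseteq> D \<and> openin (top_of_set Y) (\<Union>U))"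
  unfolding istopology_def
proof (rule conjI)
  show "\<forall>S T. S \<subseteq> D \<and> openin (top_of_set Y) (\<Union>S) \<longrightarrow> T \<subseteq> D \<and> openin (top_of_set Y) (\<Union>T) \<longrightarrow>
    S \<inter> T \<subseteq> D \<and> openin (top_of_set Y) (\<Union>(S \<inter> T))"
    using istop_Int by blast
  show "\<forall>K. (\<forall>U\<in>K. U \<subseteq> D \<and> openin (top_of_set Y) (\<Union>U)) \<longrightarrow> \<Union>K \<subseteq> D \<and> openin (top_of_set Y) (\<Union>(\<Union>K))"
    using istop_Union by blast
qed

lemma openQ: "openin Q U \<longleftrightarrow> U \<subseteq> D \<and> openin (top_of_set Y) (\<Union>U)"
  unfolding Q_def quotient_topology_def using istop by simp

lemma topQ: "topspace Q = D"
proof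
  show "topspace Q \<subseteq> D" using openQ openin_topspace by blast
  have "openin Q D" using openQ UD by simp
  then show "D \<subseteq> topspace Q" by (rule openin_subset)
qed

definition pr where "pr y = (if y \<in> \<Union>F then (THE A. A \<in> F \<and> y \<in> A) else {y})"

lemma pr_in: assumes "A \<in> F" "y \<in> A" shows "pr y = A"
proof -
  have yU: "y \<in> \<Union>F" using assms by blast
  have "(THE A. A \<in> F \<and> y \<in> A) = A"
  proof (rule the_equality)
    show "A \<in> F \<and> y \<in> A" using assms by simp
    fix B assume "B \<in> F \<and> y \<in> B"
    then show "B = A" using Fdisj'[of B A y] assms by simp
  qed
  then show ?thesis using yU by (simp add: pr_def)
qed

lemma pr_out: assumes "y \<notin> \<Union>F" shows "pr y = {y}"
  using assms by (simp add: pr_def)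

lemma pr_props: assumes y: "y \<in> Y" shows "pr y \<in> D" "y \<in> pr y"
proof -
  have "pr y \<in> D \<and> y \<in> pr y"
  proof (cases "y \<in> \<Union>F")
    case True
    then obtain A where A: "A \<in> F" "y \<in> A" by blast
    then have "pr y = A" by (rule pr_in)
    moreover have "A \<in> D" using A(1) unfolding D_iff by simp
    ultimately show ?thesis using A(2) by simp
  next
    case False
    then have "pr y = {y}" by (rule pr_out)
    moreover have "{y} \<in> D" unfolding D_iff using False y by blast
    ultimately show ?thesis by simp
  qed
  then show "pr y \<in> D" "y \<in> pr y" by simp_all
qed

lemma pr_eq: assumes d: "d \<in> D" and y: "y \<in> d" shows "pr y = d"
proof -
  have "y \<in> Y" using D_sub[OF d] y by blast
  then have "pr y \<in> D" "y \<in> pr y" by (rule pr_props)+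
  then show ?thesis using D_disj[OF _ d _ y] by blast
qed

lemma pr_image: "pr ` Y = D"
proof
  show "pr ` Y \<subseteq> D" using pr_props(1) by blast
  show "D \<subseteq> pr ` Y"
  proof
    fix d assume d: "d \<in> D"
    then obtain y where y: "y \<in> d" using D_ne by blast
    have "y \<in> Y" using D_sub[OF d] y by blast
    moreover have "pr y = d" using d y by (rule pr_eq)
    ultimately show "d \<in> pr ` Y" by blast
  qed
qed

lemma pr_pre: assumes U: "U \<subseteq> D" shows "{x \<in> Y. pr x \<in> U} = \<Union>U"
proof
  show "{x \<in> Y. pr x \<in> U} \<subseteq> \<Union>U"
  proof
    fix x assume "x \<in> {x \<in> Y. pr x \<in> U}"
    then have "x \<in> Y" "pr x \<in> U" by simp_all
    then show "x \<in> \<Union>U" using pr_props(2)[of x] by blast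
  qed
  show "\<Union>U \<subseteq> {x \<in> Y. pr x \<in> U}"
  proof
    fix x assume "x \<in> \<Union>U"
    then obtain d where d: "d \<in> U" "x \<in> d" by blast
    have dD: "d \<in> D" using d(1) U by blast
    have "pr x = d" using dD d(2) by (rule pr_eq)
    moreover have "x \<in> Y" using D_sub[OF dD] d(2) by blast
    ultimately show "x \<in> {x \<in> Y. pr x \<in> U}" using d(1) by simp
  qed
qed

lemma pr_quot: "quotient_map (top_of_set Y) Q pr"
  unfolding quotient_map_def topQ
proof (intro conjI allI impI)
  show "pr ` topspace (top_of_set Y) = D" using pr_image by simp
next
  fix U assume U: "U \<subseteq> D"
  have "{x \<in> topspace (top_of_set Y). pr x \<in> U} = \<Union>U" using pr_pre[OF U] by simp
  then show "openin (top_of_set Y) {x \<in> topspace (top_of_set Y). pr x \<in> U} = openin Q U"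
    using U openQ by simp
qed

definition gq where "gq d = bits (SOME y. y \<in> d)"

lemma gq_pr: assumes y: "y \<in> Y" shows "gq (pr y) = bits y"
proof -
  define y' where "y' = (SOME z. z \<in> pr y)"
  have "y \<in> pr y" by (rule pr_props(2)[OF y])
  then have y': "y' \<in> pr y" unfolding y'_def by (rule someI)
  have "bits y' = bits y"
  proof (cases "y \<in> \<Union>F")
    case True
    then obtain A where A: "A \<in> F" "y \<in> A" by blast
    have "pr y = A" using A by (rule pr_in)
    then have "y' \<in> A" using y' by simp
    then show ?thesis using bits_same[OF A(1)] A(2) by blast
  next
    case False
    then have "pr y = {y}" by (rule pr_out)
    then have "y' = y" using y' by simp
    then show ?thesis by simp
  qed
  then show ?thesis unfolding gq_def y'_def by simp
qed

lemma bits_level: "{x \<in> Y. bits x k = b} = \<Union>{N w (Suc k) |w. w k = b}"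
proof
  show "{x \<in> Y. bits x k = b} \<subseteq> \<Union>{N w (Suc k) |w. w k = b}"
  proof
    fix x assume x: "x \<in> {x \<in> Y. bits x k = b}"
    then have xY: "x \<in> Y" and xb: "bits x k = b" by simp_all
    have "x \<in> Py x (Suc k)" by (rule y_in_Py[OF xY])
    then have "x \<in> N (bits x) (Suc k)" by (simp add: Py_N)
    moreover have "N (bits x) (Suc k) \<in> {N w (Suc k) |w. w k = b}" using xb by blast
    ultimately show "x \<in> \<Union>{N w (Suc k) |w. w k = b}" by blast
  qed
  show "\<Union>{N w (Suc k) |w. w k = b} \<subseteq> {x \<in> Y. bits x k = b}"
  proof
    fix x assume "x \<in> \<Union>{N w (Suc k) |w. w k = b}"
    then obtain w where w: "w k = b" "x \<in> N w (Suc k)" by blast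
    have "bits x k = w k" using w(2) by (rule bits_eq)
    moreover have "x \<in> Y" using good_sub[OF N_good[of w "Suc k"]] w(2) by blast
    ultimately show "x \<in> {x \<in> Y. bits x k = b}" using w(1) by simp
  qed
qed

lemma N_open: "openin (top_of_set Y) (N w n)"
  using N_good[of w n] by (simp add: good_def clop_def)

lemma level_open: "openin (top_of_set Y) {x \<in> Y. bits x k = b}"
  unfolding bits_level by (rule openin_Union) (use N_open in blast)

lemma bits_coord_cont: "continuous_map (top_of_set Y) (discrete_topology UNIV) (\<lambda>x. bits x k)"
  unfolding continuous_map_def
proof (intro conjI allI impI)
  show "(\<lambda>x. bits x k) \<in> topspace (top_of_set Y) \<rightarrow> topspace (discrete_topology UNIV)" by simp
next
  fix V :: "bool set"
  have eq: "{x \<in> topspace (top_of_set Y). bits x k \<in> V} = \<Union>((\<lambda>b. {x \<in> Y. bits x k = b}) ` V)"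
    by auto
  show "openin (top_of_set Y) {x \<in> topspace (top_of_set Y). bits x k \<in> V}"
    unfolding eq by (rule openin_Union) (use level_open in blast)
qed

lemma bits_cont: "continuous_map (top_of_set Y) cantor_space bits"
  unfolding cantor_space_def continuous_map_componentwise_UNIV
  using bits_coord_cont by blast

lemma gq_cont: "continuous_map Q cantor_space gq"
proof (rule continuous_compose_quotient_map[OF pr_quot])
  show "continuous_map (top_of_set Y) cantor_space (gq \<circ> pr)"
  proof (rule continuous_map_eq[OF bits_cont])
    fix x assume "x \<in> topspace (top_of_set Y)"
    then have "x \<in> Y" by simp
    then show "bits x = (gq \<circ> pr) x" by (simp add: gq_pr)
  qed
qed

lemma compact_Q: "compact_space Q"
proof -
  have "compactin (top_of_set Y) Y" using cY by (simp add: compactin_subtopology)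
  moreover have "continuous_map (top_of_set Y) Q pr" by (rule quotient_imp_continuous_map[OF pr_quot])
  ultimately have "compactin Q (pr ` Y)" by (rule image_compactin)
  then show ?thesis unfolding compact_space_def topQ pr_image .
qed

lemma nest_ne: "\<exists>y\<in>Y. \<forall>n. y \<in> N w n"
proof -
  have cl: "closed (N w n)" for n
  proof -
    have "closedin (top_of_set Y) (N w n)" using N_good[of w n] by (simp add: good_def clop_def)
    then have "compact (N w n)" by (rule closedin_compact[OF cY])
    then show ?thesis by (rule compact_imp_closed)
  qed
  have "Y \<inter> (\<Inter>i\<in>UNIV. N w i) \<noteq> {}"
  proof (rule compact_imp_fip_image[OF cY])
    fix i :: nat show "closed (N w i)" by (rule cl)
  next
    fix I' :: "nat set" assume fin: "finite I'" and "I' \<subseteq> UNIV"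
    define m where "m = Max (insert 0 I')"
    have le: "\<And>i. i \<in> I' \<Longrightarrow> i \<le> m" unfolding m_def using fin by simp
    have "N w m \<subseteq> Y" by (rule good_sub[OF N_good])
    moreover have "N w m \<subseteq> N w i" if "i \<in> I'" for i using N_mono le[OF that] by blast
    ultimately have sub: "N w m \<subseteq> Y \<inter> (\<Inter>i\<in>I'. N w i)" by blast
    have "N w m \<noteq> {}" using N_good[of w m] by (simp add: good_def)
    then show "Y \<inter> (\<Inter>i\<in>I'. N w i) \<noteq> {}" using sub by blast
  qed
  then show ?thesis by blast
qed

lemma gq_surj: "gq ` D = UNIV"
proof -
  have "w \<in> gq ` D" for w
  proof -
    obtain y where y: "y \<in> Y" "\<And>n. y \<in> N w n" using nest_ne[of w] by blast
    have "bits y n = w n" for n using y(2)[of "Suc n"] by (rule bits_eq)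
    then have "bits y = w" by blast
    then have "gq (pr y) = w" using gq_pr[OF y(1)] by simp
    moreover have "pr y \<in> D" by (rule pr_props(1)[OF y(1)])
    ultimately show ?thesis by blast
  qed
  then show ?thesis by blast
qed

lemma gq_inj: "inj_on gq D"
proof
  fix d1 d2 assume d1: "d1 \<in> D" and d2: "d2 \<in> D" and eq: "gq d1 = gq d2"
  obtain y1 where y1: "y1 \<in> d1" using D_ne[OF d1] by blast
  obtain y2 where y2: "y2 \<in> d2" using D_ne[OF d2] by blast
  have Y1: "y1 \<in> Y" using D_sub[OF d1] y1 by blast
  have Y2: "y2 \<in> Y" using D_sub[OF d2] y2 by blast
  have p1: "pr y1 = d1" using d1 y1 by (rule pr_eq)
  have p2: "pr y2 = d2" using d2 y2 by (rule pr_eq)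
  have "bits y1 = gq d1" using gq_pr[OF Y1] p1 by simp
  also have "\<dots> = gq d2" by (rule eq)
  also have "\<dots> = bits y2" using gq_pr[OF Y2] p2 by simp
  finally have bb: "bits y1 = bits y2" .
  have "y1 = y2 \<or> (\<exists>A\<in>F. y1 \<in> A \<and> y2 \<in> A)"
  proof (rule ccontr)
    assume "\<not> (y1 = y2 \<or> (\<exists>A\<in>F. y1 \<in> A \<and> y2 \<in> A))"
    then have "y1 \<noteq> y2" "\<not> (\<exists>A\<in>F. y1 \<in> A \<and> y2 \<in> A)" by simp_all
    then have "bits y1 \<noteq> bits y2" using bits_sep[OF Y1 Y2] by simp
    then show False using bb by simp
  qed
  then show "d1 = d2"
  proof
    assume "y1 = y2" then show ?thesis using p1 p2 by simp
  next
    assume "\<exists>A\<in>F. y1 \<in> A \<and> y2 \<in> A"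
    then obtain A where A: "A \<in> F" "y1 \<in> A" "y2 \<in> A" by blast
    have "pr y1 = A" using A(1,2) by (rule pr_in)
    moreover have "pr y2 = A" using A(1,3) by (rule pr_in)
    ultimately show ?thesis using p1 p2 by simp
  qed
qed

lemma main: "quotient_topology Y (decomposition Y F) homeomorphic_space cantor_space"
proof -
  have "homeomorphic_map Q cantor_space gq"
  proof (rule continuous_imp_homeomorphic_map[OF gq_cont compact_Q])
    show "Hausdorff_space cantor_space"
      unfolding cantor_space_def by (simp add: Hausdorff_space_product_topology)
    show "gq ` topspace Q = topspace cantor_space"
      unfolding topQ gq_surj cantor_space_def by simp
    show "inj_on gq (topspace Q)" unfolding topQ by (rule gq_inj)
  qed
  then have "Q homeomorphic_space cantor_space" by (rule homeomorphic_map_imp_homeomorphic_space)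
  then show ?thesis unfolding Q_def D_def .
qed

end

theorem lemma2:
  fixes X :: "'b::metric_space set" and Y :: "'a::metric_space set" and \<F> :: "'a set set"
  assumes "compact X" "X \<noteq> {}" "compact Y"
    and "regularizing_family X Y \<F>"
  shows "quotient_topology Y (decomposition Y \<F>) homeomorphic_space cantor_space"
proof -
  interpret regsetup X Y \<F> using assms by unfold_locales auto
  show ?thesis by (rule main)
qed

end
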